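(* Let $H\in(1/2,1)$, $c\in(0,2^{2H-2})$ and $\lambda\in(0,c)$. For every $n\in\mathbb{N}$ and every pair of disjoint sets $A,B\subseteq\{1,2,\dots,n\}$, \[ p_n\,c^{|A|-1}\,D^\circ_H(A,B)>0 . \]
   Context: For $n\in\mathbb{N}$ put $p_n=\lambda n^{2H-2}$. For a finite set $A=\{i_0<i_1<\dots<i_k\}\subset\mathbb{N}\cup\{0\}$ define $L^\circ_H(A)=\prod_{j=1}^{k}|i_j-i_{j-1}|^{2H-2}$; if $|A|=1$ set $L^\circ_H(A)=1$, and set $L^\circ_H(\emptyset)=c/p_n$. For disjoint finite sets $A,B\subset\mathbb{N}\cup\{0\}$ define $D^\circ_H(A,B)=\sum_{B'\subseteq B}(-1)^{|B'|}c^{|B'|}L^\circ_H(A\cup B')$ (in particular $D^\circ_H(A,\emptyset)=L^\circ_H(A)$). *)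

theory Defs
  imports Complex_Main
begin

definition pn :: "real \<Rightarrow> real \<Rightarrow> nat \<Rightarrow> real" where
  "pn H lam n = lam * (real n) powr (2*H - 2)"

definition Lc :: "real \<Rightarrow> real \<Rightarrow> real \<Rightarrow> nat \<Rightarrow> nat set \<Rightarrow> real" where
  "Lc H c lam n A =
     (if A = {} then c / pn H lam n
      else (let xs = sorted_list_of_set A in
            \<Prod>j\<in>{1..<length xs}. \<bar>real (xs ! j) - real (xs ! (j - 1))\<bar> powr (2*H - 2)))"

definition Dc :: "real \<Rightarrow> real \<Rightarrow> real \<Rightarrow> nat \<Rightarrow> nat set \<Rightarrow> nat set \<Rightarrow> real" where
  "Dc H c lam n A B = (\<Sum>B'\<in>Pow B. (-1) ^ card B' * c ^ card B' * Lc H c lam n (A \<union> B'))"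

end

theory Submission
  imports Defs
begin


definition lp :: "(nat \<Rightarrow> nat \<Rightarrow> real) \<Rightarrow> nat list \<Rightarrow> real" where
  "lp g xs = (\<Prod>j\<in>{1..<length xs}. g (xs ! j) (xs ! (j - 1)))"

lemma lp_single: "lp g [a] = 1" by (simp add: lp_def)

lemma lp_cons2: "lp g (a # b # ys) = g b a * lp g (b # ys)"
proof -
  have "lp g (a # b # ys) = (\<Prod>j\<in>{1..<Suc (Suc (length ys))}. g ((a#b#ys) ! j) ((a#b#ys) ! (j - 1)))"
    by (simp add: lp_def)
  also have "\<dots> = g b a * (\<Prod>j\<in>{Suc 1..<Suc (Suc (length ys))}. g ((a#b#ys) ! j) ((a#b#ys) ! (j - 1)))"
    by (subst prod.atLeast_Suc_lessThan) auto
  also have "(\<Prod>j\<in>{Suc 1..<Suc (Suc (length ys))}. g ((a#b#ys) ! j) ((a#b#ys) ! (j - 1)))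
      = (\<Prod>j\<in>{1..<Suc (length ys)}. g ((a#b#ys) ! Suc j) ((a#b#ys) ! (Suc j - 1)))"
    by (simp only: prod.shift_bounds_Suc_ivl)
  also have "\<dots> = lp g (b # ys)"
    unfolding lp_def by (intro prod.cong) (auto simp: nth_Cons split: nat.splits)
  finally show ?thesis .
qed

lemma Lc_single: "Lc H c lam n {a} = 1"
  by (simp add: Lc_def)

lemma Lc_insert_min:
  assumes "finite X" "X \<noteq> {}" "x < Min X"
  shows "Lc H c lam n (insert x X) = (real (Min X - x)) powr (2*H-2) * Lc H c lam n X"
proof -
  let ?g = "\<lambda>a b. \<bar>real a - real b\<bar> powr (2*H - 2)"
  have xn: "x \<notin> X" using assms Min_le by fastforce
  have s1: "sorted_list_of_set (insert x X) = x # sorted_list_of_set X"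
  proof -
    have "Min (insert x X) = x" using assms by (simp add: Min_insert)
    moreover have "insert x X - {x} = X" using xn by auto
    ultimately show ?thesis using sorted_list_of_set_nonempty[of "insert x X"] assms by simp
  qed
  have s2: "sorted_list_of_set X = Min X # sorted_list_of_set (X - {Min X})"
    using sorted_list_of_set_nonempty assms by blast
  have "Lc H c lam n (insert x X) = lp ?g (x # Min X # sorted_list_of_set (X - {Min X}))"
    by (simp add: Lc_def lp_def s1 s2 Let_def)
  also have "\<dots> = ?g (Min X) x * lp ?g (Min X # sorted_list_of_set (X - {Min X}))"
    by (rule lp_cons2)
  also have "lp ?g (Min X # sorted_list_of_set (X - {Min X})) = Lc H c lam n X"
    using assms by (simp add: Lc_def lp_def s2[symmetric] Let_def)
  also have "?g (Min X) x = (real (Min X - x)) powr (2*H-2)"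
    using assms(3) by (simp add: of_nat_diff less_imp_le)
  finally show ?thesis .
qed


lemma Lc_indep: "X \<noteq> {} \<Longrightarrow> Lc H c lam n X = Lc H c lam' n' X"
  by (simp add: Lc_def)

locale L =
  fixes H c :: real
  assumes H1: "1/2 < H" and H2: "H < 1" and c0: "0 < c" and c1: "c < 2 powr (2*H-2)"
begin

definition al :: real where "al = 2*H-2"
definition u :: "nat \<Rightarrow> real" where "u k = (if k = 0 then 1 else c * real k powr al)"
definition ch :: "nat set \<Rightarrow> real" where "ch X = c ^ (card X - 1) * Lc H c 1 1 X"
definition E :: "nat set \<Rightarrow> nat set \<Rightarrow> real" where
  "E A B = (\<Sum>B'\<in>Pow B. (-1) ^ card B' * ch (A \<union> B'))"

lemma ch_single[simp]: "ch {a} = 1"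
  by (simp add: ch_def Lc_single)

lemma ch_insert_min:
  assumes "finite X" "X \<noteq> {}" "x < Min X"
  shows "ch (insert x X) = u (Min X - x) * ch X"
proof -
  have xn: "x \<notin> X" using assms Min_le by fastforce
  have cx: "card X \<ge> 1" using assms by (simp add: Suc_le_eq card_gt_0_iff)
  have "ch (insert x X) = c ^ card X * ((real (Min X - x)) powr (2*H-2) * Lc H c 1 1 X)"
    unfolding ch_def using Lc_insert_min[OF assms] xn assms(1) by simp
  also have "c ^ card X = c * c ^ (card X - 1)" using cx
    by (metis Suc_diff_le diff_Suc_1 power_Suc)
  finally show ?thesis using assms(3) by (simp add: u_def ch_def al_def)
qed

lemma ch_pair: "x < y \<Longrightarrow> ch {x, y} = u (y - x)"
  using ch_insert_min[of "{y}" x] by simp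

lemma ch_split:
  assumes "finite X" "m \<in> X"
  shows "ch X = ch {x\<in>X. x \<le> m} * ch {x\<in>X. m \<le> x}"
  using assms
proof (induction "card X" arbitrary: X rule: less_induct)
  case less
  have fX: "finite X" and mX: "m \<in> X" using less.prems by auto
  have mle: "\<And>x. x \<in> X \<Longrightarrow> Min X \<le> x" using fX by (simp add: Min_le)
  show ?case
  proof (cases "Min X = m")
    case True
    have "{x\<in>X. x \<le> m} = {m}" using True mle mX by (auto intro: antisym)
    moreover have "{x\<in>X. m \<le> x} = X" using True mle by auto
    ultimately show ?thesis by simp
  next
    case False
    define a where "a = Min X"
    define X' where "X' = X - {a}"
    have Xne: "X \<noteq> {}" using mX by blast
    have aX: "a \<in> X" using fX Xne a_def by (simp add: Min_in)
    have am: "a < m" using False mle[OF mX] a_def by simp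
    have mX': "m \<in> X'" using am mX X'_def by simp
    have fX': "finite X'" using fX X'_def by simp
    have X'ne: "X' \<noteq> {}" using mX' by blast
    have mX'in: "Min X' \<in> X'" using fX' X'ne by (simp add: Min_in)
    hence "Min X' \<in> X" "Min X' \<noteq> a" using X'_def by auto
    moreover have "a \<le> Min X'" using a_def mle \<open>Min X' \<in> X\<close> by simp
    ultimately have aM: "a < Min X'" by simp
    have XX: "X = insert a X'" using aX X'_def by blast
    have cX: "card X' < card X" unfolding X'_def using fX aX by (rule card_Diff1_less)
    have IH: "ch X' = ch {x\<in>X'. x \<le> m} * ch {x\<in>X'. m \<le> x}"
      using less.hyps[OF cX fX' mX'] .
    define L' where "L' = {x\<in>X'. x \<le> m}"
    have L'ne: "L' \<noteq> {}" "finite L'" using mX' fX' L'_def by auto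
    have minL: "Min L' = Min X'"
    proof (rule antisym)
      have "Min X' \<le> m" using fX' mX' by (simp add: Min_le)
      hence "Min X' \<in> L'" using mX'in L'_def by simp
      thus "Min L' \<le> Min X'" using L'ne(2) by (simp add: Min_le)
      have "Min L' \<in> L'" using L'ne by (simp add: Min_in)
      hence "Min L' \<in> X'" using L'_def by simp
      thus "Min X' \<le> Min L'" using fX' by (simp add: Min_le)
    qed
    have e1: "{x\<in>X. x \<le> m} = insert a L'" using aX X'_def am L'_def by auto
    have chL: "ch {x\<in>X. x \<le> m} = u (Min X' - a) * ch L'"
      unfolding e1 using ch_insert_min[OF L'ne(2) L'ne(1)] minL aM by simp
    have e2: "{x\<in>X. m \<le> x} = {x\<in>X'. m \<le> x}" using X'_def am by auto
    have chX: "ch X = u (Min X' - a) * ch X'"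
      by (subst XX, rule ch_insert_min[OF fX' X'ne aM])
    show ?thesis unfolding chX chL e2 IH L'_def by simp
  qed
qed

end


context L begin

lemma E_empty[simp]: "E A {} = ch A" by (simp add: E_def)

lemma E_del:
  assumes "finite S" "s \<notin> S" "s \<notin> A"
  shows "E A (insert s S) = E A S - E (insert s A) S"
proof -
  have inj: "inj_on (insert s) (Pow S)" using assms(2)
    by (smt (verit, ccfv_SIG) PowD inj_onI insert_ident subset_iff)
  have dis: "Pow S \<inter> insert s ` Pow S = {}" using assms(2) by auto
  have "E A (insert s S) = (\<Sum>B'\<in>Pow S. (-1) ^ card B' * ch (A \<union> B'))
        + (\<Sum>B'\<in>insert s ` Pow S. (-1) ^ card B' * ch (A \<union> B'))"
    unfolding E_def Pow_insert using assms(1) dis by (simp add: sum.union_disjoint)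
  also have "(\<Sum>B'\<in>insert s ` Pow S. (-1) ^ card B' * ch (A \<union> B'))
     = (\<Sum>B'\<in>Pow S. (-1) ^ card (insert s B') * ch (A \<union> insert s B'))"
    by (simp add: sum.reindex[OF inj])
  also have "\<dots> = (\<Sum>B'\<in>Pow S. - ((-1) ^ card B' * ch (insert s A \<union> B')))"
  proof (rule sum.cong)
    fix B' assume "B' \<in> Pow S"
    hence "finite B'" "s \<notin> B'" using assms finite_subset by auto
    thus "(-1) ^ card (insert s B') * ch (A \<union> insert s B') = - ((-1) ^ card B' * ch (insert s A \<union> B'))"
      by simp
  qed simp
  finally show ?thesis by (simp add: E_def sum_negf)
qed

lemma E_split:
  assumes "finite B" "finite A" "m \<in> A" "A \<inter> B = {}"
  shows "E A B = E {a\<in>A. a \<le> m} {b\<in>B. b < m} * E {a\<in>A. m \<le> a} {b\<in>B. m < b}"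
  using assms
proof (induction B arbitrary: A rule: finite_induct)
  case empty
  thus ?case using ch_split by simp
next
  case (insert s B)
  have sA: "s \<notin> A" "s \<noteq> m" using insert.prems by auto
  have dA: "A \<inter> B = {}" using insert.prems by auto
  have dA2: "insert s A \<inter> B = {}" using insert.prems insert.hyps by auto
  have IH1: "E A B = E {a\<in>A. a \<le> m} {b\<in>B. b < m} * E {a\<in>A. m \<le> a} {b\<in>B. m < b}"
    using insert.IH[OF insert.prems(1,2) dA] .
  have IH2: "E (insert s A) B = E {a\<in>insert s A. a \<le> m} {b\<in>B. b < m} * E {a\<in>insert s A. m \<le> a} {b\<in>B. m < b}"
    using insert.IH[OF _ _ dA2] insert.prems by simp
  have main: "E A (insert s B) = E A B - E (insert s A) B"
    using E_del insert.hyps sA by blast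
  have fB1: "finite {b\<in>B. b < m}" "finite {b\<in>B. m < b}" using insert.hyps by auto
  show ?case
  proof (cases "s < m")
    case True
    have e1: "{a\<in>insert s A. a \<le> m} = insert s {a\<in>A. a \<le> m}" using True by auto
    have e2: "{a\<in>insert s A. m \<le> a} = {a\<in>A. m \<le> a}" using True by auto
    have e3: "{b\<in>insert s B. b < m} = insert s {b\<in>B. b < m}" using True by auto
    have e4: "{b\<in>insert s B. m < b} = {b\<in>B. m < b}" using True by auto
    have d: "E {a\<in>A. a \<le> m} (insert s {b\<in>B. b < m}) = E {a\<in>A. a \<le> m} {b\<in>B. b < m} - E (insert s {a\<in>A. a \<le> m}) {b\<in>B. b < m}"
      using E_del[OF fB1(1)] insert.hyps sA by auto
    show ?thesis unfolding main IH1 IH2 e1 e2 e3 e4 d by (simp add: algebra_simps)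
  next
    case False
    hence Fm: "m < s" using sA by simp
    have e1: "{a\<in>insert s A. a \<le> m} = {a\<in>A. a \<le> m}" using Fm by auto
    have e2: "{a\<in>insert s A. m \<le> a} = insert s {a\<in>A. m \<le> a}" using Fm by auto
    have e3: "{b\<in>insert s B. b < m} = {b\<in>B. b < m}" using Fm by auto
    have e4: "{b\<in>insert s B. m < b} = insert s {b\<in>B. m < b}" using Fm by auto
    have d: "E {a\<in>A. m \<le> a} (insert s {b\<in>B. m < b}) = E {a\<in>A. m \<le> a} {b\<in>B. m < b} - E (insert s {a\<in>A. m \<le> a}) {b\<in>B. m < b}"
      using E_del[OF fB1(2)] insert.hyps sA by auto
    show ?thesis unfolding main IH1 IH2 e1 e2 e3 e4 d by (simp add: algebra_simps)
  qed
qed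

lemma al_neg: "al < 0" using H2 by (simp add: al_def)

lemma c_lt: "c < 2 powr al" using c1 by (simp add: al_def)

lemma c_lt1: "c < 1"
proof -
  have "2 powr al < 2 powr 0" using al_neg by (intro powr_less_mono) auto
  thus ?thesis using c_lt by simp
qed

lemma u_pos: "0 < u k" using c0 by (simp add: u_def)

lemma u_dec: "u (Suc k) < u k"
proof (cases "k = 0")
  case True thus ?thesis using c_lt1 by (simp add: u_def)
next
  case False
  have "real (Suc k) powr al < real k powr al"
    using False al_neg by (intro powr_less_mono2_neg) auto
  thus ?thesis using False c0 by (simp add: u_def)
qed

lemma u_anti: "a \<le> b \<Longrightarrow> u b \<le> u a"
  using lift_Suc_antimono_le[of u] u_dec less_imp_le by blast

lemma u_key:
  assumes "j < n"
  shows "u n * u (Suc j) \<le> u (Suc n) * u j"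
    and "j = 0 \<Longrightarrow> u n * u (Suc j) < u (Suc n) * u j"
proof -
  have n0: "n \<ge> 1" using assms by simp
  have strict0: "u n * u (Suc 0) < u (Suc n) * u 0"
  proof -
    have "real (Suc n) \<le> 2 * real n" using n0 by simp
    hence "(2 * real n) powr al \<le> real (Suc n) powr al"
      using al_neg by (intro powr_mono2') auto
    moreover have "(2 * real n) powr al = 2 powr al * real n powr al"
      by (simp add: powr_mult)
    moreover have "c * real n powr al < 2 powr al * real n powr al"
      using c_lt n0 by (intro mult_strict_right_mono) auto
    ultimately have "c * real n powr al < real (Suc n) powr al" by linarith
    hence "c * (c * real n powr al) < c * real (Suc n) powr al" using c0 by simp
    thus ?thesis using n0 by (simp add: u_def algebra_simps)
  qed
  show "j = 0 \<Longrightarrow> u n * u (Suc j) < u (Suc n) * u j" using strict0 by simp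
  show "u n * u (Suc j) \<le> u (Suc n) * u j"
  proof (cases "j = 0")
    case True thus ?thesis using strict0 by simp
  next
    case False
    have "real j \<le> real n" using assms by simp
    hence "real (Suc n) * real j \<le> real n * real (Suc j)" by (simp add: algebra_simps)
    hence "(real n * real (Suc j)) powr al \<le> (real (Suc n) * real j) powr al"
      using al_neg False by (intro powr_mono2') auto
    hence "real n powr al * real (Suc j) powr al \<le> real (Suc n) powr al * real j powr al"
      by (simp add: powr_mult)
    hence "(c*c) * (real n powr al * real (Suc j) powr al) \<le> (c*c) * (real (Suc n) powr al * real j powr al)"
      using c0 by (intro mult_left_mono) auto
    thus ?thesis using False n0 by (simp add: u_def algebra_simps)
  qed
qed

end


context L begin

definition f :: "nat \<Rightarrow> nat \<Rightarrow> real" where "f x y = E {x, y} {x<..<y}"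

lemma E3_split:
  assumes "x < j" "j < y" "finite S" "S \<subseteq> {x<..<y}" "j \<notin> S"
  shows "E {x, j, y} S = E {x, j} {b\<in>S. b < j} * E {j, y} {b\<in>S. j < b}"
proof -
  have "E {x, j, y} S = E {a\<in>{x,j,y}. a \<le> j} {b\<in>S. b < j} * E {a\<in>{x,j,y}. j \<le> a} {b\<in>S. j < b}"
    using assms by (intro E_split) auto
  moreover have "{a\<in>{x,j,y}. a \<le> j} = {x, j}" "{a\<in>{x,j,y}. j \<le> a} = {j, y}" using assms by auto
  ultimately show ?thesis by simp
qed

lemma ren_left_aux:
  "Suc x + k \<le> y \<Longrightarrow> u (y - x) = E {x, y} {x<..<Suc x + k} + (\<Sum>i\<in>{x<..<Suc x + k}. f x i * u (y - i))"
proof (induction k)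
  case 0
  have "{x<..<Suc x} = {}" by auto
  thus ?case using 0 ch_pair[of x y] by simp
next
  case (Suc k)
  define j where "j = Suc x + k"
  have xj: "x < j" "j < y" using Suc.prems j_def by auto
  have I: "{x<..<Suc x + Suc k} = insert j {x<..<j}" using j_def by auto
  have "E {x, y} (insert j {x<..<j}) = E {x, y} {x<..<j} - E (insert j {x, y}) {x<..<j}"
    using xj by (intro E_del) auto
  moreover have "insert j {x, y} = {x, j, y}" by auto
  moreover have "E {x, j, y} {x<..<j} = f x j * u (y - j)"
  proof -
    have s1: "{b\<in>{x<..<j}. b < j} = {x<..<j}" and s2: "{b\<in>{x<..<j}. j < b} = {}" by auto
    have "E {x, j, y} {x<..<j} = E {x, j} {x<..<j} * E {j, y} {}"
      using E3_split[of x j y "{x<..<j}", unfolded s1 s2] xj by (simp add: subset_eq)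
    thus ?thesis using ch_pair xj by (simp add: f_def)
  qed
  moreover have "(\<Sum>i\<in>insert j {x<..<j}. f x i * u (y - i)) = f x j * u (y - j) + (\<Sum>i\<in>{x<..<j}. f x i * u (y - i))"
    by simp
  ultimately show ?case using Suc.IH Suc.prems j_def I by simp
qed

lemma ren_left:
  assumes "x < y"
  shows "u (y - x) = (\<Sum>i\<in>{x<..y}. f x i * u (y - i))"
proof -
  obtain k where k: "y = Suc x + k" using assms less_iff_Suc_add by auto
  have "u (y - x) = E {x, y} {x<..<y} + (\<Sum>i\<in>{x<..<y}. f x i * u (y - i))"
    using ren_left_aux[of x k y] k by simp
  moreover have "{x<..y} = insert y {x<..<y}" using assms by auto
  ultimately show ?thesis by (simp add: f_def u_def)
qed

lemma ren_right_aux: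
  "Suc k \<le> y - x \<Longrightarrow> u (y - x) = E {x, y} {y - Suc k<..<y} + (\<Sum>i\<in>{y - Suc k<..<y}. u (i - x) * f i y)"
proof (induction k)
  case 0
  have "{y - Suc 0<..<y} = {}" by auto
  thus ?case using 0 ch_pair[of x y] by simp
next
  case (Suc k)
  define j where "j = y - Suc k"
  have xj: "x < j" "j < y" using Suc.prems j_def by auto
  have I: "{y - Suc (Suc k)<..<y} = insert j {j<..<y}" using j_def xj by auto
  have "E {x, y} (insert j {j<..<y}) = E {x, y} {j<..<y} - E (insert j {x, y}) {j<..<y}"
    using xj by (intro E_del) auto
  moreover have "insert j {x, y} = {x, j, y}" by auto
  moreover have "E {x, j, y} {j<..<y} = u (j - x) * f j y"
  proof -
    have s1: "{b\<in>{j<..<y}. b < j} = {}" and s2: "{b\<in>{j<..<y}. j < b} = {j<..<y}" by auto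
    have "E {x, j, y} {j<..<y} = E {x, j} {} * E {j, y} {j<..<y}"
      using E3_split[of x j y "{j<..<y}", unfolded s1 s2] xj by (simp add: subset_eq)
    thus ?thesis using ch_pair xj by (simp add: f_def)
  qed
  moreover have "(\<Sum>i\<in>insert j {j<..<y}. u (i - x) * f i y) = u (j - x) * f j y + (\<Sum>i\<in>{j<..<y}. u (i - x) * f i y)"
    by simp
  ultimately show ?case using Suc.IH Suc.prems j_def I by simp
qed

lemma ren_right:
  assumes "x < y"
  shows "u (y - x) = (\<Sum>i\<in>{x..<y}. u (i - x) * f i y)"
proof -
  have "u (y - x) = E {x, y} {x<..<y} + (\<Sum>i\<in>{x<..<y}. u (i - x) * f i y)"
    using ren_right_aux[of "y - x - 1" y x] assms by (simp add: Suc_diff_Suc)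
  moreover have "{x..<y} = insert x {x<..<y}" using assms by auto
  ultimately show ?thesis by (simp add: f_def u_def)
qed

lemma ren_F:
  assumes "1 \<le> n"
  shows "u n = (\<Sum>k\<in>{1..n}. f x (x + k) * u (n - k))"
proof -
  have "u n = (\<Sum>i\<in>{x<..x+n}. f x i * u (x + n - i))" using ren_left[of x "x+n"] assms by simp
  also have "\<dots> = (\<Sum>k\<in>{1..n}. f x (x + k) * u (n - k))"
    by (rule sum.reindex_bij_witness[of _ "\<lambda>k. x + k" "\<lambda>i. i - x"]) (auto simp: algebra_simps)
  finally show ?thesis .
qed

lemma F_pos: "1 \<le> n \<Longrightarrow> 0 < f x (x + n)"
proof (induction n rule: less_induct)
  case (less n)
  show ?case
  proof (cases "n = 1")
    case True
    have "u 1 = f x (x + 1)" using ren_F[of 1 x] by (simp add: u_def)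
    thus ?thesis using True u_pos[of 1] by simp
  next
    case False
    then obtain m where m: "n = Suc m" "1 \<le> m" using less.prems by (cases n) auto
    have r1: "u (Suc m) = (\<Sum>k\<in>{1..m}. f x (x + k) * u (Suc m - k)) + f x (x + Suc m)"
      using ren_F[of "Suc m" x] by (simp add: u_def)
    have r0: "u m = (\<Sum>k\<in>{1..m}. f x (x + k) * u (m - k))" using ren_F[OF m(2)] .
    have "u m * f x (x + Suc m) = u m * u (Suc m) - u m * (\<Sum>k\<in>{1..m}. f x (x + k) * u (Suc m - k))"
      using r1 by (simp add: algebra_simps)
    also have "\<dots> = (\<Sum>k\<in>{1..m}. f x (x + k) * (u (Suc m) * u (m - k) - u m * u (Suc m - k)))"
      apply (subst (1) r0)
      by (simp add: sum_distrib_left sum_distrib_right sum_subtractf algebra_simps)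
    also have "\<dots> > 0"
    proof (rule sum_pos2[where i = m])
      show "finite {1..m}" by simp
      show "m \<in> {1..m}" using m by simp
      have "u m * u (Suc 0) < u (Suc m) * u 0" using u_key(2)[of 0 m] m by simp
      moreover have "0 < f x (x + m)" using less.IH m by simp
      ultimately show "0 < f x (x + m) * (u (Suc m) * u (m - m) - u m * u (Suc m - m))" by simp
      show "0 \<le> f x (x + k) * (u (Suc m) * u (m - k) - u m * u (Suc m - k))" if k: "k \<in> {1..m}" for k
      proof -
        have "0 < f x (x + k)" using less.IH k m by simp
        moreover have "u m * u (Suc (m - k)) \<le> u (Suc m) * u (m - k)" using u_key(1)[of "m - k" m] k by simp
        moreover have "Suc m - k = Suc (m - k)" using k by auto
        ultimately show "0 \<le> f x (x + k) * (u (Suc m) * u (m - k) - u m * u (Suc m - k))" by simp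
      qed
    qed
    finally have "0 < u m * f x (x + Suc m)" .
    thus ?thesis using u_pos[of m] m by (simp add: zero_less_mult_iff)
  qed
qed

lemma f_pos: "x < y \<Longrightarrow> 0 < f x y"
  using F_pos[of "y - x" x] by simp

lemma sumL_lt1:
  assumes "x < j"
  shows "(\<Sum>i\<in>{x<..j}. f x i) < 1"
proof -
  have "(\<Sum>i\<in>{x<..j}. f x i) * u (j - x - 1) = (\<Sum>i\<in>{x<..j}. f x i * u (j - x - 1))"
    by (simp add: sum_distrib_right)
  also have "\<dots> \<le> (\<Sum>i\<in>{x<..j}. f x i * u (j - i))"
    by (intro sum_mono mult_left_mono u_anti) (auto intro: less_imp_le f_pos)
  also have "\<dots> = u (j - x)" using ren_left[OF assms] by simp
  also have "\<dots> < u (j - x - 1)" using u_dec[of "j - x - 1"] assms by (simp add: Suc_diff_Suc)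
  finally show ?thesis using u_pos[of "j - x - 1"] by simp
qed

lemma sumR_lt1:
  assumes "j < y"
  shows "(\<Sum>i\<in>{j..<y}. f i y) < 1"
proof -
  have "(\<Sum>i\<in>{j..<y}. f i y) * u (y - j - 1) = (\<Sum>i\<in>{j..<y}. f i y * u (y - j - 1))"
    by (simp add: sum_distrib_right)
  also have "\<dots> \<le> (\<Sum>i\<in>{j..<y}. f i y * u (i - j))"
    by (intro sum_mono mult_left_mono u_anti) (auto intro: less_imp_le f_pos)
  also have "\<dots> = (\<Sum>i\<in>{j..<y}. u (i - j) * f i y)" by (simp add: mult.commute)
  also have "\<dots> = u (y - j)" using ren_right[OF assms] by simp
  also have "\<dots> < u (y - j - 1)" using u_dec[of "y - j - 1"] assms by (simp add: Suc_diff_Suc)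
  finally show ?thesis using u_pos[of "y - j - 1"] by simp
qed

end


context L begin

lemma Phi_ge: "x < y \<Longrightarrow> S \<subseteq> {x<..<y} \<Longrightarrow> f x y \<le> E {x, y} S"
proof (induction "y - x" arbitrary: x y S rule: less_induct)
  case less
  define I where "I = {x<..<y}"
  have key: "f x y \<le> E {x, y} (I - D)" if "D \<subseteq> I" for D
  proof -
    have "finite D" using that finite_subset I_def by blast
    thus ?thesis using that
    proof (induction D rule: finite_induct)
      case empty thus ?case by (simp add: I_def f_def)
    next
      case (insert d D)
      define S0 where "S0 = I - insert d D"
      have dI: "d \<in> I" "D \<subseteq> I" using insert.prems by auto
      have xd: "x < d" "d < y" using dI I_def by auto
      have e: "I - D = insert d S0" using dI insert.hyps S0_def by auto
      have fS0: "finite S0" "d \<notin> S0" "S0 \<subseteq> {x<..<y}" using S0_def I_def by auto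
      have "E {x, y} (insert d S0) = E {x, y} S0 - E (insert d {x, y}) S0"
        using fS0 xd by (intro E_del) auto
      moreover have "insert d {x, y} = {x, d, y}" by auto
      moreover have "0 < E {x, d, y} S0"
      proof -
        have s1: "{b\<in>S0. b < d} \<subseteq> {x<..<d}" "{b\<in>S0. d < b} \<subseteq> {d<..<y}" using fS0 by auto
        have "E {x, d, y} S0 = E {x, d} {b\<in>S0. b < d} * E {d, y} {b\<in>S0. d < b}"
          using fS0 xd by (intro E3_split) auto
        moreover have "f x d \<le> E {x, d} {b\<in>S0. b < d}"
          by (rule less.hyps) (use xd s1 in auto)
        moreover have "f d y \<le> E {d, y} {b\<in>S0. d < b}"
          by (rule less.hyps) (use xd s1 in auto)
        ultimately show ?thesis using f_pos[OF xd(1)] f_pos[OF xd(2)] by (simp add: mult_pos_pos)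
      qed
      ultimately have "E {x, y} (I - D) < E {x, y} S0" using e by simp
      moreover have "f x y \<le> E {x, y} (I - D)" using insert.IH dI by simp
      ultimately show ?case using S0_def by simp
    qed
  qed
  have "S = I - (I - S)" using less.prems I_def by auto
  thus ?case using key[of "I - S"] by simp
qed

lemma Phi_pos: "x < y \<Longrightarrow> S \<subseteq> {x<..<y} \<Longrightarrow> 0 < E {x, y} S"
  using Phi_ge f_pos by (meson less_le_trans)

lemma RL_tel: "E {x} {x<..j} = 1 - (\<Sum>i\<in>{x<..j}. f x i)"
proof (induction j)
  case 0 thus ?case by simp
next
  case (Suc j)
  show ?case
  proof (cases "Suc j \<le> x")
    case True
    hence "{x<..Suc j} = {}" by auto
    thus ?thesis by simp
  next
    case False
    have e: "{x<..Suc j} = insert (Suc j) {x<..j}" using False by auto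
    have "E {x} (insert (Suc j) {x<..j}) = E {x} {x<..j} - E (insert (Suc j) {x}) {x<..j}"
      using False by (intro E_del) auto
    moreover have "insert (Suc j) {x} = {x, Suc j}" by auto
    moreover have "{x<..j} = {x<..<Suc j}" by auto
    ultimately show ?thesis unfolding e using Suc.IH by (simp add: f_def)
  qed
qed

lemma RL_pos1: "0 < 1 - (\<Sum>i\<in>{x<..M}. f x i)"
proof (cases "x < M")
  case True thus ?thesis using sumL_lt1 by simp
next
  case False hence "{x<..M} = {}" by auto
  thus ?thesis by simp
qed

lemma RL_ge: "S \<subseteq> {x<..M} \<Longrightarrow> 1 - (\<Sum>i\<in>{x<..M}. f x i) \<le> E {x} S"
proof (induction "M - x" arbitrary: x S rule: less_induct)
  case less
  define I where "I = {x<..M}"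
  have key: "E {x} I \<le> E {x} (I - D)" if "D \<subseteq> I" for D
  proof -
    have "finite D" using that finite_subset I_def by blast
    thus ?thesis using that
    proof (induction D rule: finite_induct)
      case empty thus ?case by simp
    next
      case (insert d D)
      define S0 where "S0 = I - insert d D"
      have dI: "d \<in> I" "D \<subseteq> I" using insert.prems by auto
      have xd: "x < d" "d \<le> M" using dI I_def by auto
      have e: "I - D = insert d S0" using dI insert.hyps S0_def by auto
      have fS0: "finite S0" "d \<notin> S0" "S0 \<subseteq> {x<..M}" using S0_def I_def by auto
      have "E {x} (insert d S0) = E {x} S0 - E (insert d {x}) S0"
        using fS0 xd by (intro E_del) auto
      moreover have "insert d {x} = {x, d}" by auto
      moreover have "0 < E {x, d} S0"
      proof -
        have "E {x, d} S0 = E {a\<in>{x, d}. a \<le> d} {b\<in>S0. b < d} * E {a\<in>{x, d}. d \<le> a} {b\<in>S0. d < b}"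
          using fS0 xd by (intro E_split) auto
        moreover have "{a\<in>{x, d}. a \<le> d} = {x, d}" "{a\<in>{x, d}. d \<le> a} = {d}" using xd by auto
        moreover have "{b\<in>S0. b < d} \<subseteq> {x<..<d}" using fS0 by auto
        hence "0 < E {x, d} {b\<in>S0. b < d}"
          using Phi_pos[of x d] xd by auto
        moreover have "0 < E {d} {b\<in>S0. d < b}"
        proof -
          have "1 - (\<Sum>i\<in>{d<..M}. f d i) \<le> E {d} {b\<in>S0. d < b}"
            by (rule less.hyps) (use xd fS0 in auto)
          thus ?thesis using RL_pos1[of d M] by linarith
        qed
        ultimately show ?thesis by simp
      qed
      ultimately have "E {x} (I - D) < E {x} S0" using e by simp
      moreover have "E {x} I \<le> E {x} (I - D)" using insert.IH dI by simp
      ultimately show ?case using S0_def by simp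
    qed
  qed
  have "S = I - (I - S)" using less.prems I_def by auto
  hence "E {x} I \<le> E {x} S" using key[of "I - S"] by simp
  thus ?case using RL_tel[of x M] I_def by simp
qed

lemma RL_pos: "S \<subseteq> {x<..M} \<Longrightarrow> 0 < E {x} S"
  using RL_ge RL_pos1 by (meson less_le_trans)

lemma RR_tel: "E {y} {y - d..<y} = 1 - (\<Sum>i\<in>{y - d..<y}. f i y)"
proof (induction d)
  case 0 thus ?case by simp
next
  case (Suc d)
  show ?case
  proof (cases "y \<le> d")
    case True
    hence "y - Suc d = y - d" by simp
    thus ?thesis using Suc.IH by simp
  next
    case False
    define j where "j = y - Suc d"
    have jy: "j < y" "Suc j = y - d" using False j_def by auto
    have e: "{y - Suc d..<y} = insert j {y - d..<y}" using jy j_def by auto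
    have "E {y} (insert j {y - d..<y}) = E {y} {y - d..<y} - E (insert j {y}) {y - d..<y}"
      using jy by (intro E_del) auto
    moreover have "insert j {y} = {j, y}" by auto
    moreover have "{y - d..<y} = {j<..<y}" using jy by auto
    ultimately show ?thesis unfolding e using Suc.IH jy by (simp add: f_def)
  qed
qed

lemma RR_pos1: "0 < 1 - (\<Sum>i\<in>{m..<y}. f i y)"
proof (cases "m < y")
  case True thus ?thesis using sumR_lt1 by simp
next
  case False hence "{m..<y} = {}" by auto
  thus ?thesis by simp
qed

lemma RR_ge: "S \<subseteq> {m..<y} \<Longrightarrow> 1 - (\<Sum>i\<in>{m..<y}. f i y) \<le> E {y} S"
proof (induction "y - m" arbitrary: y S rule: less_induct)
  case less
  define I where "I = {m..<y}"
  have key: "E {y} I \<le> E {y} (I - D)" if "D \<subseteq> I" for D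
  proof -
    have "finite D" using that finite_subset I_def by blast
    thus ?thesis using that
    proof (induction D rule: finite_induct)
      case empty thus ?case by simp
    next
      case (insert d D)
      define S0 where "S0 = I - insert d D"
      have dI: "d \<in> I" "D \<subseteq> I" using insert.prems by auto
      have xd: "m \<le> d" "d < y" using dI I_def by auto
      have e: "I - D = insert d S0" using dI insert.hyps S0_def by auto
      have fS0: "finite S0" "d \<notin> S0" "S0 \<subseteq> {m..<y}" using S0_def I_def by auto
      have "E {y} (insert d S0) = E {y} S0 - E (insert d {y}) S0"
        using fS0 xd by (intro E_del) auto
      moreover have "insert d {y} = {d, y}" by auto
      moreover have "0 < E {d, y} S0"
      proof -
        have "E {d, y} S0 = E {a\<in>{d, y}. a \<le> d} {b\<in>S0. b < d} * E {a\<in>{d, y}. d \<le> a} {b\<in>S0. d < b}"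
          using fS0 xd by (intro E_split) auto
        moreover have "{a\<in>{d, y}. a \<le> d} = {d}" "{a\<in>{d, y}. d \<le> a} = {d, y}" using xd by auto
        moreover have "{b\<in>S0. d < b} \<subseteq> {d<..<y}" using fS0 by auto
        hence "0 < E {d, y} {b\<in>S0. d < b}"
          using Phi_pos[of d y] xd by auto
        moreover have "0 < E {d} {b\<in>S0. b < d}"
        proof -
          have "1 - (\<Sum>i\<in>{m..<d}. f i d) \<le> E {d} {b\<in>S0. b < d}"
            by (rule less.hyps) (use xd fS0 in auto)
          thus ?thesis using RR_pos1[where m=m and y=d] by linarith
        qed
        ultimately show ?thesis by simp
      qed
      ultimately have "E {y} (I - D) < E {y} S0" using e by simp
      moreover have "E {y} I \<le> E {y} (I - D)" using insert.IH dI by simp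
      ultimately show ?case using S0_def by simp
    qed
  qed
  have "S = I - (I - S)" using less.prems I_def by auto
  hence "E {y} I \<le> E {y} S" using key[of "I - S"] by simp
  moreover have "I = {y - (y - m)..<y}"
  proof (cases "m \<le> y")
    case True thus ?thesis using I_def by simp
  next
    case False thus ?thesis using I_def by auto
  qed
  ultimately show ?case using RR_tel[of y "y - m"] I_def by simp
qed

lemma RR_pos: "S \<subseteq> {m..<y} \<Longrightarrow> 0 < E {y} S"
  using RR_ge RR_pos1 by (meson less_le_trans)

lemma single_pos:
  assumes "finite S" "a \<notin> S"
  shows "0 < E {a} S"
proof -
  have "E {a} S = E {x\<in>{a}. x \<le> a} {b\<in>S. b < a} * E {x\<in>{a}. a \<le> x} {b\<in>S. a < b}"
    using assms by (intro E_split) auto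
  moreover have "{x\<in>{a}. x \<le> a} = {a}" "{x\<in>{a}. a \<le> x} = {a}" by auto
  moreover have "0 < E {a} {b\<in>S. b < a}" by (rule RR_pos[of _ 0]) auto
  moreover have "0 < E {a} {b\<in>S. a < b}" by (rule RL_pos[of _ _ "Max S"]) (auto simp: assms(1))
  ultimately show ?thesis by simp
qed

lemma E_pos:
  assumes "finite A" "A \<noteq> {}" "finite B" "A \<inter> B = {}"
  shows "0 < E A B"
  using assms
proof (induction "card A" arbitrary: A B rule: less_induct)
  case less
  define a where "a = Max A"
  have aA: "a \<in> A" using less.prems a_def by simp
  show ?case
  proof (cases "A = {a}")
    case True thus ?thesis using single_pos less.prems by auto
  next
    case False
    define A0 where "A0 = A - {a}"
    have A0ne: "A0 \<noteq> {}" "finite A0" using False aA A0_def less.prems by auto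
    define a' where "a' = Max A0"
    have a'A0: "a' \<in> A0" using A0ne a'_def by simp
    have a'a: "a' < a" using a'A0 A0_def a_def less.prems
      by (metis DiffE Max_ge insertI1 le_neq_implies_less)
    have le_a': "\<And>x. x \<in> A0 \<Longrightarrow> x \<le> a'" using A0ne a'_def by simp
    have le_a: "\<And>x. x \<in> A \<Longrightarrow> x \<le> a" using less.prems a_def by simp
    have e1: "{x\<in>A. x \<le> a'} = A0" using le_a' a'a A0_def by auto
    have e2: "{x\<in>A. a' \<le> x} = {a', a}"
    proof
      show "{x\<in>A. a' \<le> x} \<subseteq> {a', a}" using le_a' A0_def by (auto intro: antisym)
      show "{a', a} \<subseteq> {x\<in>A. a' \<le> x}" using a'A0 A0_def aA a'a by auto
    qed
    have "E A B = E A0 {b\<in>B. b < a'} * E {a', a} {b\<in>B. a' < b}"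
      using E_split[of B A a'] less.prems a'A0 A0_def e1 e2 by auto
    moreover have "0 < E A0 {b\<in>B. b < a'}"
    proof (rule less.hyps)
      show "card A0 < card A" unfolding A0_def by (rule card_Diff1_less) (use aA less.prems in auto)
    qed (use A0ne A0_def less.prems in auto)
    moreover have "0 < E {a', a} {b\<in>B. a' < b}"
    proof -
      let ?B2 = "{b\<in>B. a' < b}"
      have "E {a', a} ?B2 = E {x\<in>{a', a}. x \<le> a} {b\<in>?B2. b < a} * E {x\<in>{a', a}. a \<le> x} {b\<in>?B2. a < b}"
        using less.prems aA by (intro E_split) auto
      moreover have "{x\<in>{a', a}. x \<le> a} = {a', a}" "{x\<in>{a', a}. a \<le> x} = {a}" using a'a by auto
      moreover have "0 < E {a', a} {b\<in>?B2. b < a}" by (rule Phi_pos[OF a'a]) auto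
      moreover have "0 < E {a} {b\<in>?B2. a < b}" by (rule single_pos) (use less.prems in auto)
      ultimately show ?thesis by simp
    qed
    ultimately show ?thesis by simp
  qed
qed

end


context L begin

definition Z :: "nat set \<Rightarrow> real" where "Z B = E {} B - ch {}"

lemma Z_insert: "finite C \<Longrightarrow> b \<notin> C \<Longrightarrow> Z (insert b C) = Z C - E {b} C"
  using E_del[of C b "{}"] by (simp add: Z_def)

lemma Z_bound:
  assumes "B \<subseteq> {1..n}"
  shows "- Z B * (c * real n powr al) \<le> 1 - E {0} B"
  using assms
proof (induction "card B" arbitrary: B rule: less_induct)
  case less
  have fB: "finite B" using less.prems finite_subset by blast
  show ?case
  proof (cases "B = {}")
    case True thus ?thesis by (simp add: Z_def)
  next
    case False
    define b where "b = Min B"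
    define C where "C = B - {b}"
    have bB: "b \<in> B" using fB False b_def by simp
    have BC: "B = insert b C" "b \<notin> C" "finite C" using bB C_def fB by auto
    have Cgt: "\<And>x. x \<in> C \<Longrightarrow> b < x"
      using C_def b_def fB by (metis DiffE Min_le insertCI le_neq_implies_less)
    have b1: "1 \<le> b" "b \<le> n" using bB less.prems by auto
    have cC: "card C < card B" unfolding C_def by (rule card_Diff1_less) (use fB bB in auto)
    have IH: "- Z C * (c * real n powr al) \<le> 1 - E {0} C"
      by (rule less.hyps[OF cC]) (use less.prems C_def in auto)
    have E0: "E {0} B = E {0} C - u b * E {b} C"
    proof -
      have "E {0} (insert b C) = E {0} C - E (insert b {0}) C"
        using BC b1 less.prems C_def by (intro E_del) auto
      moreover have "E {0, b} C = E {a\<in>{0, b}. a \<le> b} {x\<in>C. x < b} * E {a\<in>{0, b}. b \<le> a} {x\<in>C. b < x}"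
        using BC b1 less.prems C_def by (intro E_split) auto
      moreover have "{a\<in>{0::nat, b}. a \<le> b} = {0, b}" "{a\<in>{0, b}. b \<le> a} = {b}" using b1 by auto
      moreover have "{x\<in>C. x < b} = {}" using Cgt by (auto dest!: Cgt)
      moreover have "{x\<in>C. b < x} = C" using Cgt by auto
      moreover have "insert b {0} = {0, b}" by auto
      ultimately show ?thesis using BC ch_pair[of 0 b] b1 by simp
    qed
    have Eb: "0 < E {b} C" using single_pos BC by simp
    have K: "c * real n powr al \<le> u b"
    proof -
      have "real n powr al \<le> real b powr al" using b1 al_neg by (intro powr_mono2') auto
      thus ?thesis using b1 c0 by (simp add: u_def)
    qed
    have "- Z B * (c * real n powr al) = - Z C * (c * real n powr al) + E {b} C * (c * real n powr al)"
    proof -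
      have zb: "Z B = Z C - E {b} C" using Z_insert[OF BC(3) BC(2)] BC(1) by simp
      show ?thesis by (subst zb) (simp add: algebra_simps)
    qed
    also have "\<dots> \<le> (1 - E {0} C) + E {b} C * u b"
      using IH K Eb by (intro add_mono mult_left_mono) auto
    also have "\<dots> = 1 - E {0} B" using E0 by simp
    finally show ?thesis .
  qed
qed

lemma Dc_pos:
  assumes "0 < lam" "lam < c" "1 \<le> n" "A \<subseteq> {1..n}" "B \<subseteq> {1..n}" "A \<inter> B = {}"
  shows "0 < Dc H c lam n A B"
proof -
  have fB: "finite B" using assms(5) by (rule finite_subset) simp
  have fA: "finite A" using assms(4) by (rule finite_subset) simp
  have npos: "0 < real n powr al" using assms by simp
  have pn: "pn H lam n = lam * real n powr al" by (simp add: pn_def al_def)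
  have pnpos: "0 < pn H lam n" using pn npos assms by simp
  show ?thesis
  proof (cases "A = {}")
    case False
    have cA: "1 \<le> card A" using False fA by (simp add: Suc_le_eq card_gt_0_iff)
    have "c ^ (card A - 1) * Dc H c lam n A B = E A B"
      unfolding Dc_def E_def sum_distrib_left
    proof (rule sum.cong)
      fix B' assume "B' \<in> Pow B"
      hence B': "finite B'" "A \<inter> B' = {}" using fB assms(6) finite_subset by auto
      have cu: "card (A \<union> B') = card A + card B'" using B' fA by (simp add: card_Un_disjoint)
      have "c ^ (card A - 1) * c ^ card B' = c ^ (card (A \<union> B') - 1)"
        using cu cA by (simp add: power_add[symmetric])
      moreover have "Lc H c lam n (A \<union> B') = Lc H c 1 1 (A \<union> B')" using False by (intro Lc_indep) auto
      ultimately show "c ^ (card A - 1) * ((-1) ^ card B' * c ^ card B' * Lc H c lam n (A \<union> B'))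
          = (-1) ^ card B' * ch (A \<union> B')"
        unfolding ch_def by (simp add: algebra_simps)
    qed simp
    moreover have "0 < E A B" using E_pos fA False fB assms(6) by simp
    moreover have "0 < c ^ (card A - 1)" using c0 by simp
    ultimately show ?thesis by (metis zero_less_mult_pos)
  next
    case True
    have rem: "Pow B = insert {} (Pow B - {{}})" by auto
    have "Dc H c lam n A B = c / pn H lam n + (\<Sum>B'\<in>Pow B - {{}}. (-1) ^ card B' * c ^ card B' * Lc H c lam n B')"
      unfolding Dc_def True by (subst rem, subst sum.insert) (auto simp: fB Lc_def)
    also have "(\<Sum>B'\<in>Pow B - {{}}. (-1) ^ card B' * c ^ card B' * Lc H c lam n B') = c * Z B"
    proof -
      have "E {} B = ch {} + (\<Sum>B'\<in>Pow B - {{}}. (-1) ^ card B' * ch B')"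
        unfolding E_def by (subst rem, subst sum.insert) (auto simp: fB)
      hence "Z B = (\<Sum>B'\<in>Pow B - {{}}. (-1) ^ card B' * ch B')" by (simp add: Z_def)
      moreover have "(\<Sum>B'\<in>Pow B - {{}}. (-1) ^ card B' * c ^ card B' * Lc H c lam n B')
          = (\<Sum>B'\<in>Pow B - {{}}. c * ((-1) ^ card B' * ch B'))"
      proof (rule sum.cong)
        fix B' assume "B' \<in> Pow B - {{}}"
        hence B': "finite B'" "B' \<noteq> {}" using fB finite_subset by auto
        have "1 \<le> card B'" using B' by (simp add: Suc_le_eq card_gt_0_iff)
        hence "c ^ card B' = c * c ^ (card B' - 1)" by (metis Suc_diff_le diff_Suc_1 power_Suc)
        moreover have "Lc H c lam n B' = Lc H c 1 1 B'" using B' by (intro Lc_indep)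
        ultimately show "(-1) ^ card B' * c ^ card B' * Lc H c lam n B' = c * ((-1) ^ card B' * ch B')"
          unfolding ch_def by (simp add: algebra_simps)
      qed simp
      ultimately show ?thesis by (simp add: sum_distrib_left)
    qed
    finally have D: "Dc H c lam n A B = c / pn H lam n + c * Z B" .
    define K where "K = c * real n powr al"
    have Kp: "pn H lam n < K" using pn K_def npos assms by simp
    have "- Z B * K \<le> 1 - E {0} B" using Z_bound[OF assms(5)] K_def by simp
    moreover have "0 < E {0} B" by (rule RL_pos[of _ _ n]) (use assms in auto)
    ultimately have zk: "- Z B * K < 1" by simp
    have "- Z B * pn H lam n < 1"
    proof (cases "- Z B \<le> 0")
      case True thus ?thesis using pnpos by (smt (verit) mult_nonpos_nonneg)
    next
      case False
      hence "- Z B * pn H lam n < - Z B * K" using Kp by simp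
      thus ?thesis using zk by simp
    qed
    hence "0 < 1 + Z B * pn H lam n" by simp
    hence "0 < c * (1 + Z B * pn H lam n) / pn H lam n" using c0 pnpos by simp
    also have "c * (1 + Z B * pn H lam n) / pn H lam n = Dc H c lam n A B"
      using D pnpos by (simp add: field_simps)
    finally show ?thesis .
  qed
qed

end

theorem lemma2p3:
  fixes H c lam :: real and n :: nat and A B :: "nat set"
  assumes "1/2 < H" "H < 1"
    and "0 < c" "c < 2 powr (2*H - 2)"
    and "0 < lam" "lam < c"
    and "1 \<le> n"
    and "A \<subseteq> {1..n}" "B \<subseteq> {1..n}" "A \<inter> B = {}"
  shows "pn H lam n * c powr (real (card A) - 1) * Dc H c lam n A B > 0"
proof -
  interpret L H c by unfold_locales (use assms in auto)
  have "0 < Dc H c lam n A B" using Dc_pos assms by blast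
  moreover have "0 < pn H lam n" using assms by (simp add: pn_def)
  moreover have "0 < c powr (real (card A) - 1)" using assms by simp
  ultimately show ?thesis by simp
qed


end
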